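(* Let $f(z)=z+\sum_{n\ge 2}a_nz^n\in\mathcal{BT}_{\mathfrak{B}}$ and let $\Gamma_1,\Gamma_2$ be the logarithmic inverse coefficients of $f$. Then $$|\Gamma_1|\le\frac18\qquad\text{and}\qquad |\Gamma_2|\le\frac{1}{12}.$$ The inequalities are sharp, with equality for $f_1(z)=\int_0^z\sqrt{1+\tanh t}\,dt$ and $f_2(z)=\int_0^z\sqrt{1+\tanh(t^2)}\,dt$, respectively.
   Context: $\mathbb{D}=\{z\in\mathbb{C}:|z|<1\}$. $\mathcal{S}$ is the class of univalent analytic functions $f$ on $\mathbb{D}$ normalized by $f(0)=0$, $f'(0)=1$, i.e. $f(z)=z+\sum_{n\ge2}a_nz^n$. For analytic $g,h$ on $\mathbb{D}$, $g\prec h$ means there is an analytic $\omega:\mathbb{D}\to\mathbb{D}$ with $\omega(0)=0$ and $g=h\circ\omega$. Let $\mathfrak{B}(z)=\sqrt{1+\tanh z}$ (principal branch, $\mathfrak{B}(0)=1$). The class $\mathcal{BT}_{\mathfrak{B}}$ is $\{f\in\mathcal{S}: f'(z)\prec \mathfrak{B}(z)\}$. For $f\in\mathcal{S}$ let $F=f^{-1}$ be its inverse, defined near $0$ (at least on $|w|<1/4$). The logarithmic inverse coefficients $\Gamma_n$ are defined by $\log\frac{f^{-1}(w)}{w}=2\sum_{n\ge1}\Gamma_n w^n$; explicitly $\Gamma_1=-\tfrac12a_2$, $\Gamma_2=-\tfrac12(a_3-\tfrac32a_2^2)$, $\Gamma_3=-\tfrac12(a_4-4a_2a_3+\tfrac{10}{3}a_2^3)$.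 *)

theory Defs
  imports "HOL-Complex_Analysis.Complex_Analysis"
begin

definition Bfun :: "complex \<Rightarrow> complex" where
  "Bfun z = csqrt (1 + tanh z)"

definition subordinate :: "(complex \<Rightarrow> complex) \<Rightarrow> (complex \<Rightarrow> complex) \<Rightarrow> bool" where
  "subordinate g h \<longleftrightarrow>
     (\<exists>\<omega>. \<omega> holomorphic_on ball 0 1 \<and> \<omega> 0 = 0 \<and>
          (\<forall>z\<in>ball 0 1. norm (\<omega> z) < 1) \<and>
          (\<forall>z\<in>ball 0 1. g z = h (\<omega> z)))"

definition classS :: "(complex \<Rightarrow> complex) set" where
  "classS = {f. f holomorphic_on ball 0 1 \<and> inj_on f (ball 0 1) \<and> f 0 = 0 \<and> deriv f 0 = 1}"

definition classBT :: "(complex \<Rightarrow> complex) set" where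
  "classBT = {f \<in> classS. subordinate (deriv f) Bfun}"

text \<open>Logarithmic inverse coefficients: log (F(w)/w) = 2 * sum Gamma_n w^n,
  where F is the inverse of f on the unit disc; the function log(F(w)/w)
  is extended by its limit value 0 (= log F'(0)) at w = 0.\<close>
definition log_inv_fun :: "(complex \<Rightarrow> complex) \<Rightarrow> complex \<Rightarrow> complex" where
  "log_inv_fun f w = (if w = 0 then 0 else Ln (inv_into (ball 0 1) f w / w))"

definition log_inv_coeff :: "(complex \<Rightarrow> complex) \<Rightarrow> nat \<Rightarrow> complex" where
  "log_inv_coeff f n = ((deriv ^^ n) (log_inv_fun f) 0 / fact n) / 2"

definition f1 :: "complex \<Rightarrow> complex" where
  "f1 z = contour_integral (linepath 0 z) Bfun"

definition f2 :: "complex \<Rightarrow> complex" where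
  "f2 z = contour_integral (linepath 0 z) (\<lambda>t. Bfun (t ^ 2))"

end

theory Submission
  imports Defs
begin


lemma dtrans:
  fixes a b :: "complex \<Rightarrow> complex"
  assumes "open U" "w \<in> U" "\<And>x. x \<in> U \<Longrightarrow> a x = b x"
  shows "deriv a w = deriv b w"
  by (rule deriv_cong_ev) (use assms in \<open>auto simp: eventually_nhds\<close>)

lemma hcomp:
  fixes g p :: "complex \<Rightarrow> complex"
  assumes "g holomorphic_on V" "p holomorphic_on U" "p ` U \<subseteq> V"
  shows "(\<lambda>x. g (p x)) holomorphic_on U"
  using holomorphic_on_compose_gen[OF assms(2,1,3)] by (simp add: comp_def)

lemma dcomp:
  fixes g p :: "complex \<Rightarrow> complex"
  assumes "g holomorphic_on V" "open V" "p holomorphic_on U" "open U" "p ` U \<subseteq> V" "w \<in> U"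
  shows "deriv (\<lambda>x. g (p x)) w = deriv g (p w) * deriv p w"
  using deriv_chain[of p w g] assms
  by (auto simp: comp_def holomorphic_on_imp_differentiable_at)

lemma fdiff:
  fixes p :: "complex \<Rightarrow> complex"
  shows "p holomorphic_on U \<Longrightarrow> open U \<Longrightarrow> w \<in> U \<Longrightarrow> p field_differentiable at w"
  by (simp add: holomorphic_on_imp_differentiable_at)

lemma hd: "p holomorphic_on U \<Longrightarrow> open U \<Longrightarrow> deriv p holomorphic_on U"
  by (rule holomorphic_deriv)

lemma dcomp2:
  fixes g p :: "complex \<Rightarrow> complex"
  assumes g: "g holomorphic_on V" and V: "open V" and p: "p holomorphic_on U" and U: "open U"
    and sub: "p ` U \<subseteq> V" and w: "w \<in> U"
  shows "deriv (deriv (\<lambda>x. g (p x))) w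
       = deriv (deriv g) (p w) * (deriv p w)^2 + deriv g (p w) * deriv (deriv p) w"
proof -
  have "deriv (deriv (\<lambda>x. g (p x))) w = deriv (\<lambda>x. deriv g (p x) * deriv p x) w"
    by (rule dtrans[OF U w]) (rule dcomp[OF g V p U sub])
  also have "\<dots> = deriv g (p w) * deriv (deriv p) w + deriv (\<lambda>x. deriv g (p x)) w * deriv p w"
    by (rule deriv_mult) (use fdiff[OF hcomp[OF hd[OF g V] p sub] U w] fdiff[OF hd[OF p U] U w] in auto)
  also have "deriv (\<lambda>x. deriv g (p x)) w = deriv (deriv g) (p w) * deriv p w"
    by (rule dcomp[OF hd[OF g V] V p U sub w])
  finally show ?thesis by (simp add: power2_eq_square algebra_simps)
qed

lemma dcomp3:
  fixes g p :: "complex \<Rightarrow> complex"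
  assumes g: "g holomorphic_on V" and V: "open V" and p: "p holomorphic_on U" and U: "open U"
    and sub: "p ` U \<subseteq> V" and w: "w \<in> U"
  shows "deriv (deriv (deriv (\<lambda>x. g (p x)))) w
       = deriv (deriv (deriv g)) (p w) * (deriv p w)^3
         + 3 * deriv (deriv g) (p w) * deriv p w * deriv (deriv p) w
         + deriv g (p w) * deriv (deriv (deriv p)) w"
proof -
  have g1: "deriv g holomorphic_on V" using g V hd by blast
  have g2: "deriv (deriv g) holomorphic_on V" using g1 V hd by blast
  have p1: "deriv p holomorphic_on U" using p U hd by blast
  have p2: "deriv (deriv p) holomorphic_on U" using p1 U hd by blast
  have A: "(\<lambda>x. deriv (deriv g) (p x)) holomorphic_on U" using hcomp[OF g2 p sub] .
  have C: "(\<lambda>x. deriv g (p x)) holomorphic_on U" using hcomp[OF g1 p sub] .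
  have B: "(\<lambda>x. (deriv p x)^2) holomorphic_on U" by (rule holomorphic_on_power[OF p1])
  have "deriv (deriv (deriv (\<lambda>x. g (p x)))) w
      = deriv (\<lambda>x. deriv (deriv g) (p x) * (deriv p x)^2 + deriv g (p x) * deriv (deriv p) x) w"
    by (rule dtrans[OF U w]) (rule dcomp2[OF g V p U sub])
  also have "\<dots> = deriv (\<lambda>x. deriv (deriv g) (p x) * (deriv p x)^2) w
                 + deriv (\<lambda>x. deriv g (p x) * deriv (deriv p) x) w"
    by (rule deriv_add) (use fdiff[OF holomorphic_on_mult[OF A B] U w] fdiff[OF holomorphic_on_mult[OF C p2] U w] in auto)
  also have "deriv (\<lambda>x. deriv (deriv g) (p x) * (deriv p x)^2) w
     = deriv (deriv g) (p w) * deriv (\<lambda>x. (deriv p x)^2) w + deriv (\<lambda>x. deriv (deriv g) (p x)) w * (deriv p w)^2"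
    by (rule deriv_mult) (use fdiff[OF A U w] fdiff[OF B U w] in auto)
  also have "deriv (\<lambda>x. (deriv p x)^2) w = 2 * deriv (deriv p) w * deriv p w"
  proof -
    have "deriv (\<lambda>x. (deriv p x)^2) w = deriv (\<lambda>x. deriv p x * deriv p x) w"
      by (simp add: power2_eq_square)
    also have "\<dots> = deriv p w * deriv (deriv p) w + deriv (deriv p) w * deriv p w"
      by (rule deriv_mult) (use fdiff[OF p1 U w] in auto)
    finally show ?thesis by simp
  qed
  also have "deriv (\<lambda>x. deriv (deriv g) (p x)) w = deriv (deriv (deriv g)) (p w) * deriv p w"
    by (rule dcomp[OF g2 V p U sub w])
  also have "deriv (\<lambda>x. deriv g (p x) * deriv (deriv p) x) w
     = deriv g (p w) * deriv (deriv (deriv p)) w + deriv (\<lambda>x. deriv g (p x)) w * deriv (deriv p) w"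
    by (rule deriv_mult) (use fdiff[OF C U w] fdiff[OF p2 U w] in auto)
  also have "deriv (\<lambda>x. deriv g (p x)) w = deriv (deriv g) (p w) * deriv p w"
    by (rule dcomp[OF g1 V p U sub w])
  finally show ?thesis by (simp add: power2_eq_square power3_eq_cube algebra_simps)
qed

lemma dmulid:
  fixes p :: "complex \<Rightarrow> complex"
  assumes "p field_differentiable at w"
  shows "deriv (\<lambda>x. x * p x) w = w * deriv p w + p w"
proof -
  have "((\<lambda>x. x * p x) has_field_derivative (w * deriv p w + 1 * p w)) (at w)"
    using assms by (auto intro!: derivative_eq_intros simp: field_differentiable_derivI)
  then show ?thesis by (simp add: DERIV_imp_deriv)
qed

lemma alg: fixes a b g2 g3 G1 G2 c1 c2 :: complex
  assumes "a + g2 = 0" "g2 = 2*G1" "b + 3*a*g2 + g3 = 0" "g3 = 3*G2" "c1 = G1/2" "c2 = (G2 - G1^2)/4"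
  shows "c1 = -a/4 \<and> c2 = -b/12 + 3*a^2/16"
proof -
  have g2: "g2 = -a" using assms(1) by (simp add: add_eq_0_iff)
  have G1: "G1 = -a/2" using assms(2) g2 by simp
  have g3: "g3 = -b + 3*a^2" using assms(3) g2 by (simp add: add_eq_0_iff power2_eq_square algebra_simps)
  have G2: "G2 = (-b + 3*a^2)/3" using assms(4) g3 by simp
  show ?thesis using assms(5,6) G1 G2 by (simp add: field_simps power2_eq_square)
qed

lemma funpow_deriv:
  "(deriv ^^ 1) h = deriv h" "(deriv ^^ 2) h = deriv (deriv h)"
  "(deriv ^^ 3) h = deriv (deriv (deriv h))"
  by (simp_all add: numeral_eq_Suc)


lemma a4: "(e::complex) \<noteq> 0 \<Longrightarrow> e*e + 1 \<noteq> 0 \<Longrightarrow> 1 + (e - inverse e) / (e + inverse e) = 2 * (e * e) / (e * e + 1)"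
proof -
  assume e: "e \<noteq> 0" and e1: "e*e + 1 \<noteq> 0"
  have "e + inverse e = (e*e+1)/e" "e - inverse e = (e*e - 1)/e" using e by (simp_all add: field_simps)
  then have "(e - inverse e) / (e + inverse e) = (e*e - 1)/(e*e+1)" using e by simp
  moreover have "1 + (e*e - 1)/(e*e+1) = 2 * (e * e) / (e * e + 1)"
    using e1 by (simp add: add_divide_eq_iff)
  ultimately show ?thesis by simp
qed

lemma T_ok:
  fixes z :: complex
  assumes "norm z < 1"
  shows "cosh z \<noteq> 0" "1 + tanh z \<notin> \<real>\<^sub>\<le>\<^sub>0"
proof -
  define u where "u = exp (2*z)"
  have y: "\<bar>Im z\<bar> < 1" using abs_Im_le_cmod[of z] assms by linarith
  have Reu: "Re u = exp (2 * Re z) * cos (2 * Im z)" by (simp add: u_def Re_exp)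
  have Imu: "Im u = exp (2 * Re z) * sin (2 * Im z)" by (simp add: u_def Im_exp)
  have key: "Im u \<noteq> 0 \<or> (Im u = 0 \<and> Re u > 0)"
  proof (cases "sin (2 * Im z) = 0")
    case True
    have "-pi < 2 * Im z" "2 * Im z < pi" using y pi_gt3 by linarith+
    then have "2 * Im z = 0" using sin_eq_0_pi True by blast
    then show ?thesis using Reu Imu by simp
  next
    case False
    then show ?thesis using Imu by simp
  qed
  have u1: "u + 1 \<noteq> 0"
  proof
    assume "u + 1 = 0"
    then have "u = -1" by (simp add: add_eq_0_iff2)
    then show False using key by simp
  qed
  have e0: "exp z \<noteq> 0" by simp
  have eu: "exp z * exp z = u" by (simp only: u_def mult_2 exp_add)
  have ch0: "cosh z = (exp z + inverse (exp z)) / 2"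
    unfolding cosh_def exp_minus by (simp add: scaleR_conv_of_real)
  have ch1: "(exp z + inverse (exp z)) / 2 = (exp z * exp z + 1) / (2 * exp z)"
    using e0 by (simp add: field_simps)
  have ch: "cosh z = (u + 1) / (2 * exp z)" using ch0 ch1 eu by simp
  show "cosh z \<noteq> 0" using ch u1 e0 by simp
  have th0: "tanh z = (exp z - inverse (exp z)) / (exp z + inverse (exp z))"
    unfolding tanh_altdef exp_minus ..
  have th1: "1 + (exp z - inverse (exp z)) / (exp z + inverse (exp z)) = 2 * (exp z * exp z) / (exp z * exp z + 1)"
    using a4[OF e0] u1 eu by simp
  have th: "1 + tanh z = 2 * u / (u + 1)" using th0 th1 eu by simp
  define d where "d = (Re u + 1)^2 + (Im u)^2"
  have "d = (cmod (u + 1))^2" by (simp add: d_def cmod_power2)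
  then have d: "d > 0" using u1 by simp
  have Imw: "Im (2 * u / (u + 1)) = 2 * Im u / d"
    by (simp add: Im_divide d_def algebra_simps power2_eq_square)
  have Rew: "Im u = 0 \<Longrightarrow> Re (2 * u / (u + 1)) = 2 * Re u * (Re u + 1) / d"
    by (simp add: Re_divide d_def algebra_simps power2_eq_square)
  show "1 + tanh z \<notin> \<real>\<^sub>\<le>\<^sub>0"
    unfolding th complex_nonpos_Reals_iff
  proof
    assume a: "Re (2 * u / (u + 1)) \<le> 0 \<and> Im (2 * u / (u + 1)) = 0"
    then have "Im u = 0" using Imw d by simp
    then have "Re u > 0" using key by simp
    then have "Re (2 * u / (u + 1)) > 0" using Rew \<open>Im u = 0\<close> d by simp
    then show False using a by simp
  qed
qed


lemma Bfun_eq: "Bfun = (\<lambda>z. csqrt (1 + tanh z))"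
  by (simp add: Bfun_def fun_eq_iff)

lemma T_deriv: "norm (z::complex) < 1 \<Longrightarrow> ((\<lambda>z. 1 + tanh z) has_field_derivative (1 - tanh z ^ 2)) (at z)"
  using T_ok[of z] by (auto intro!: derivative_eq_intros)

lemma T_hol: "(\<lambda>z. 1 + tanh z) holomorphic_on ball (0::complex) 1"
  unfolding holomorphic_on_open[OF open_ball] using T_deriv by force

lemma T_img: "(\<lambda>z. 1 + tanh z) ` ball (0::complex) 1 \<subseteq> - \<real>\<^sub>\<le>\<^sub>0"
  using T_ok by auto

lemma open_slit: "open (- \<real>\<^sub>\<le>\<^sub>0 :: complex set)"
  by (simp add: open_Compl)

lemma B_hol: "Bfun holomorphic_on ball 0 1"
  unfolding Bfun_eq by (rule hcomp[OF holomorphic_on_csqrt T_hol T_img])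

lemma B0: "Bfun 0 = 1" by (simp add: Bfun_def)

lemma B_derivs: "deriv Bfun 0 = 1/2" "deriv (deriv Bfun) 0 = -1/4"
proof -
  have dT: "\<And>z. z \<in> ball (0::complex) 1 \<Longrightarrow> deriv (\<lambda>z. 1 + tanh z) z = 1 - tanh z ^ 2"
    using T_deriv DERIV_imp_deriv by force
  have dT0: "deriv (\<lambda>z. 1 + tanh z) (0::complex) = 1" using dT[of 0] by simp
  have ddT0: "deriv (deriv (\<lambda>z. 1 + tanh z)) (0::complex) = 0"
  proof -
    have "deriv (deriv (\<lambda>z. 1 + tanh z)) 0 = deriv (\<lambda>z. 1 - tanh z ^ 2) (0::complex)"
      by (rule dtrans[of "ball 0 1"]) (auto simp: dT)
    also have "\<dots> = 0"
      by (rule DERIV_imp_deriv) (auto intro!: derivative_eq_intros)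
    finally show ?thesis .
  qed
  have dS: "\<And>w. w \<in> - \<real>\<^sub>\<le>\<^sub>0 \<Longrightarrow> deriv csqrt w = inverse (2 * csqrt w)"
    by (rule DERIV_imp_deriv, rule has_field_derivative_csqrt) simp
  have one: "(1::complex) \<in> - \<real>\<^sub>\<le>\<^sub>0" by (simp add: complex_nonpos_Reals_iff)
  have dS1: "deriv csqrt 1 = 1/2" using dS[OF one] by simp
  have ddS1: "deriv (deriv csqrt) 1 = -1/4"
  proof -
    have "deriv (deriv csqrt) 1 = deriv (\<lambda>w. inverse (2 * csqrt w)) 1"
      by (rule dtrans[OF open_slit one]) (simp add: dS)
    also have "\<dots> = -1/4"
      by (rule DERIV_imp_deriv) (use one in \<open>auto intro!: derivative_eq_intros\<close>)
    finally show ?thesis .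
  qed
  have z0: "(0::complex) \<in> ball 0 1" by simp
  show "deriv Bfun 0 = 1/2"
    unfolding Bfun_eq using dcomp[OF holomorphic_on_csqrt open_slit T_hol open_ball T_img z0] dS1 dT0 by simp
  show "deriv (deriv Bfun) 0 = -1/4"
    unfolding Bfun_eq using dcomp2[OF holomorphic_on_csqrt open_slit T_hol open_ball T_img z0] dS1 dT0 ddS1 ddT0
    by simp
qed

lemma Re_csqrt_pos: "w \<notin> \<real>\<^sub>\<le>\<^sub>0 \<Longrightarrow> Re (csqrt w) > 0"
proof (rule ccontr)
  assume w: "w \<notin> \<real>\<^sub>\<le>\<^sub>0" and "\<not> Re (csqrt w) > 0"
  define c where "c = csqrt w"
  have r: "Re c = 0" using Re_csqrt[of w] \<open>\<not> Re (csqrt w) > 0\<close> by (simp add: c_def)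
  have "c * c = w" unfolding c_def power2_eq_square[symmetric] by (rule power2_csqrt)
  then have "Re w = (Re c)^2 - (Im c)^2" "Im w = 2 * Re c * Im c"
    by (auto simp: power2_eq_square)
  then have "w \<in> \<real>\<^sub>\<le>\<^sub>0" using r by (simp add: complex_nonpos_Reals_iff)
  then show False using w by simp
qed

lemma ReB: "norm z < 1 \<Longrightarrow> Re (Bfun z) > 0"
  using T_ok(2)[of z] Re_csqrt_pos[of "1 + tanh z"] unfolding Bfun_def by blast


lemma f_derivs:
  fixes f om :: "complex \<Rightarrow> complex"
  assumes hf: "f holomorphic_on ball 0 1" and hw: "om holomorphic_on ball 0 1"
    and wimg: "om ` ball 0 1 \<subseteq> ball 0 1" and w0: "om 0 = 0"
    and df: "\<And>z. z \<in> ball 0 1 \<Longrightarrow> deriv f z = Bfun (om z)"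
  shows "deriv (deriv f) 0 = deriv om 0 / 2"
    and "deriv (deriv (deriv f)) 0 = - ((deriv om 0)^2) / 4 + deriv (deriv om) 0 / 2"
proof -
  have z0: "(0::complex) \<in> ball 0 1" by simp
  have e1: "\<And>x. x \<in> ball 0 1 \<Longrightarrow> deriv (deriv f) x = deriv (\<lambda>z. Bfun (om z)) x"
    by (rule dtrans[OF open_ball _ df])
  show "deriv (deriv f) 0 = deriv om 0 / 2"
    using e1[OF z0] dcomp[OF B_hol open_ball hw open_ball wimg z0] w0 B_derivs by simp
  have "deriv (deriv (deriv f)) 0 = deriv (deriv (\<lambda>z. Bfun (om z))) 0"
    by (rule dtrans[OF open_ball z0 e1])
  then show "deriv (deriv (deriv f)) 0 = - ((deriv om 0)^2) / 4 + deriv (deriv om) 0 / 2"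
    using dcomp2[OF B_hol open_ball hw open_ball wimg z0] w0 B_derivs by simp
qed

lemma schwarz2:
  fixes om :: "complex \<Rightarrow> complex"
  assumes hw: "om holomorphic_on ball 0 1" and w0: "om 0 = 0"
    and wlt: "\<And>z. norm z < 1 \<Longrightarrow> norm (om z) < 1"
  shows "norm (deriv om 0) \<le> 1"
    and "norm (deriv (deriv om) 0) \<le> 2 * (1 - (norm (deriv om 0))^2)"
proof -
  have z0: "(0::complex) \<in> ball 0 1" by simp
  have SL1: "\<And>\<xi>. norm \<xi> < 1 \<Longrightarrow> norm (om \<xi>) \<le> norm \<xi>"
    using Schwarz_Lemma(1)[OF hw w0 wlt] by blast
  show n1: "norm (deriv om 0) \<le> 1" using Schwarz_Lemma(2)[OF hw w0 wlt, of 0] by simp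
  have SL3: "((\<exists>z. norm z < 1 \<and> z \<noteq> 0 \<and> norm(om z) = norm z) \<or> norm(deriv om 0) = 1)
           \<Longrightarrow> \<exists>al. (\<forall>z. norm z < 1 \<longrightarrow> om z = al * z) \<and> norm al = 1"
    using Schwarz_Lemma(3)[OF hw w0 wlt, of 0] by simp
  obtain h where hh: "h holomorphic_on ball 0 1" and wh: "\<And>z. norm z < 1 \<Longrightarrow> om z = z * h z"
      and dw0: "deriv om 0 = h 0"
    using Schwarz3[OF hw w0] by blast
  have hh1: "deriv h holomorphic_on ball 0 1" using hd[OF hh open_ball] .
  have dw: "\<And>x. x \<in> ball 0 1 \<Longrightarrow> deriv om x = x * deriv h x + h x"
  proof -
    fix x :: complex assume x: "x \<in> ball 0 1"
    have "deriv om x = deriv (\<lambda>z. z * h z) x" by (rule dtrans[OF open_ball x]) (simp add: wh)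
    also have "\<dots> = x * deriv h x + h x" by (rule dmulid[OF fdiff[OF hh open_ball x]])
    finally show "deriv om x = x * deriv h x + h x" .
  qed
  have ddw0: "deriv (deriv om) 0 = 2 * deriv h 0"
  proof -
    have "deriv (deriv om) 0 = deriv (\<lambda>x. x * deriv h x + h x) 0" by (rule dtrans[OF open_ball z0 dw])
    also have "\<dots> = deriv (\<lambda>x. x * deriv h x) 0 + deriv h 0"
      by (subst deriv_add) (use fdiff[OF hh1 open_ball z0] fdiff[OF hh open_ball z0] in \<open>auto intro: field_differentiable_mult\<close>)
    also have "deriv (\<lambda>x. x * deriv h x) 0 = 0 * deriv (deriv h) 0 + deriv h 0"
      by (rule dmulid[OF fdiff[OF hh1 open_ball z0]])
    finally show ?thesis by simp
  qed
  define c where "c = h 0"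
  show "norm (deriv (deriv om) 0) \<le> 2 * (1 - (norm (deriv om 0))^2)"
  proof (cases "norm c = 1")
    case True
    then have "norm (deriv om 0) = 1" using dw0 c_def by simp
    then obtain al where al0: "\<forall>z. norm z < 1 \<longrightarrow> om z = al * z" and "norm al = 1"
      using SL3 by blast
    then have al: "\<And>z. norm z < 1 \<Longrightarrow> om z = al * z" by blast
    have "\<And>x. x \<in> ball 0 1 \<Longrightarrow> deriv om x = al"
    proof -
      fix x :: complex assume x: "x \<in> ball 0 1"
      have "deriv om x = deriv (\<lambda>z. al * z) x" by (rule dtrans[OF open_ball x]) (simp add: al)
      then show "deriv om x = al" by simp
    qed
    then have "deriv (deriv om) 0 = deriv (\<lambda>z. al) 0" by (intro dtrans[OF open_ball z0])
    then have "deriv (deriv om) 0 = 0" by simp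
    then show ?thesis using True dw0 c_def by simp
  next
    case False
    have c1: "norm c < 1" using False n1 dw0 c_def by simp
    have hlt: "\<And>z. norm z < 1 \<Longrightarrow> norm (h z) < 1"
    proof -
      fix z :: complex assume z: "norm z < 1"
      show "norm (h z) < 1"
      proof (cases "z = 0")
        case True then show ?thesis using c1 c_def by simp
      next
        case False
        have le: "norm (om z) \<le> norm z" using SL1[OF z] .
        have eq: "norm (om z) = norm z * norm (h z)" using wh[OF z] by (simp add: norm_mult)
        have "norm (h z) \<le> 1" using le eq False by (simp add: mult_le_cancel_left1)
        moreover have "norm (h z) \<noteq> 1"
        proof
          assume "norm (h z) = 1"
          then have "norm (om z) = norm z" using eq by simp
          then have "\<exists>z. norm z < 1 \<and> z \<noteq> 0 \<and> norm(om z) = norm z" using z False by blast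
          then obtain al where al0: "\<forall>z. norm z < 1 \<longrightarrow> om z = al * z" and nal: "norm al = 1"
            using SL3 by blast
          then have al: "\<And>z. norm z < 1 \<Longrightarrow> om z = al * z" by blast
          have "deriv om 0 = deriv (\<lambda>z. al * z) 0" by (rule dtrans[OF open_ball z0]) (simp add: al)
          then have "deriv om 0 = al" by simp
          then show False using c1 c_def dw0 nal by simp
        qed
        ultimately show ?thesis by simp
      qed
    qed
    define M where "M = Moebius_function 0 c"
    have M_eq: "M = (\<lambda>z. (z - c) / (1 - cnj c * z))" by (simp add: M_def fun_eq_iff Moebius_function_simple)
    have hM: "M holomorphic_on ball 0 1" unfolding M_def using Moebius_function_holomorphic c1 by blast
    have himg: "h ` ball 0 1 \<subseteq> ball 0 1" using hlt by auto
    define psi where "psi z = M (h z)" for z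
    have hpsi: "psi holomorphic_on ball 0 1" unfolding psi_def by (rule hcomp[OF hM hh himg])
    have psi0: "psi 0 = 0" by (simp add: psi_def M_def c_def[symmetric] Moebius_function_eq_zero)
    have psilt: "\<And>z. norm z < 1 \<Longrightarrow> norm (psi z) < 1"
      unfolding psi_def M_def using Moebius_function_norm_lt_1 c1 hlt by blast
    have nd: "norm (deriv psi 0) \<le> 1" using Schwarz_Lemma(2)[OF hpsi psi0 psilt, of 0] by simp
    have ccn: "cnj c * c = of_real ((norm c)^2)" by (metis complex_norm_square mult.commute)
    have den: "1 - cnj c * c \<noteq> 0"
    proof
      assume "1 - cnj c * c = 0"
      then have "of_real ((norm c)^2) = (1::complex)" using ccn by simp
      then have "(norm c)^2 = 1" using of_real_eq_1_iff by blast
      then show False using c1 by (simp add: power_less_one_iff abs_square_eq_1)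
    qed
    have q: "\<And>d::complex. d \<noteq> 0 \<Longrightarrow> d / d^2 = 1 / d" by (simp add: power2_eq_square)
    have dMc: "deriv M c = 1 / (1 - cnj c * c)"
    proof -
      have "(M has_field_derivative 1 / (1 - cnj c * c)) (at c)"
        unfolding M_eq using den q[OF den] by (auto intro!: derivative_eq_intros)
      then show ?thesis by (simp add: DERIV_imp_deriv)
    qed
    have "deriv psi 0 = deriv M (h 0) * deriv h 0"
      unfolding psi_def by (rule dcomp[OF hM open_ball hh open_ball himg z0])
    then have "deriv psi 0 = deriv h 0 / (1 - cnj c * c)" using dMc c_def by simp
    moreover have nn: "norm (1 - cnj c * c) = 1 - (norm c)^2"
    proof -
      have "1 - cnj c * c = of_real (1 - (norm c)^2)" using ccn by simp
      moreover have "(norm c)^2 < 1" using c1 by (simp add: power_less_one_iff abs_square_less_1)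
      ultimately show ?thesis by (simp only: norm_of_real)
    qed
    ultimately have "norm (deriv h 0) / (1 - (norm c)^2) \<le> 1"
      using nd by (simp add: norm_divide)
    then have "norm (deriv h 0) \<le> 1 - (norm c)^2"
      using c1 by (simp add: divide_le_eq power_less_one_iff abs_square_less_1 split: if_splits)
    then show ?thesis using ddw0 dw0 c_def by (simp add: norm_mult)
  qed
qed


lemma inv_coeffs:
  assumes "f \<in> classS"
  shows "log_inv_coeff f 1 = - deriv (deriv f) 0 / 4 \<and>
         log_inv_coeff f 2 = - deriv (deriv (deriv f)) 0 / 12 + 3 * (deriv (deriv f) 0)^2 / 16"
proof -
  define D :: "complex set" where "D = ball 0 1"
  have hf: "f holomorphic_on D" and inj: "inj_on f D" and f0: "f 0 = 0" and df0: "deriv f 0 = 1"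
    using assms by (auto simp: classS_def D_def)
  have oD: "open D" and D0: "0 \<in> D" by (auto simp: D_def)
  obtain g where hg: "g holomorphic_on (f ` D)"
      and dfg: "\<And>z. z \<in> D \<Longrightarrow> deriv f z * deriv g (f z) = 1"
      and gf: "\<And>z. z \<in> D \<Longrightarrow> g (f z) = z"
    using holomorphic_has_inverse[OF hf oD inj] by blast
  define U0 where "U0 = f ` D"
  have oU0: "open U0" unfolding U0_def by (rule open_mapping_thm3[OF hf oD inj])
  have U00: "0 \<in> U0" using f0 D0 unfolding U0_def by force
  have hg': "g holomorphic_on U0" using hg by (simp add: U0_def)
  have gU0: "g ` U0 \<subseteq> D" using gf by (auto simp: U0_def)
  have fg: "\<And>w. w \<in> U0 \<Longrightarrow> f (g w) = w" using gf by (auto simp: U0_def)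
  have g0: "g 0 = 0" using gf[OF D0] f0 by simp
  have dg0: "deriv g 0 = 1" using dfg[OF D0] f0 df0 by simp
  have invg: "\<And>w. w \<in> U0 \<Longrightarrow> inv_into D f w = g w"
    using gf inj by (auto simp: U0_def inv_into_f_f)
  define G where "G w = (if w = 0 then deriv g 0 else g w / w)" for w
  have hG: "G holomorphic_on U0"
    by (rule pole_theorem_open_0[OF hg' oU0, of 0]) (auto simp: G_def g0)
  have gG: "\<And>w. w \<in> U0 \<Longrightarrow> g w = w * G w" by (auto simp: G_def g0)
  have G0: "G 0 = 1" by (simp add: G_def dg0)
  define U where "U = U0 \<inter> G -` ball 1 1"
  have oU: "open U" unfolding U_def
    by (rule continuous_open_preimage[OF holomorphic_on_imp_continuous_on[OF hG] oU0]) auto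
  have U0': "0 \<in> U" using U00 G0 by (simp add: U_def)
  have UU0: "U \<subseteq> U0" by (auto simp: U_def)
  have hGU: "G holomorphic_on U" using hG UU0 holomorphic_on_subset by blast
  have GU: "G ` U \<subseteq> ball 1 1" by (auto simp: U_def)
  have bnp: "ball (1::complex) 1 \<inter> \<real>\<^sub>\<le>\<^sub>0 = {}"
  proof (rule ccontr)
    assume "ball (1::complex) 1 \<inter> \<real>\<^sub>\<le>\<^sub>0 \<noteq> {}"
    then obtain x :: complex where x1: "x \<in> ball 1 1" and x2: "x \<in> \<real>\<^sub>\<le>\<^sub>0" by blast
    from x1 have "cmod (1 - x) < 1" by (simp add: dist_norm)
    moreover from x2 have "Re x \<le> 0" "Im x = 0" by (auto simp: complex_nonpos_Reals_iff)
    moreover have "\<bar>Re (1 - x)\<bar> \<le> cmod (1 - x)" by (rule abs_Re_le_cmod)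
    ultimately show False by simp
  qed
  have hLn: "Ln holomorphic_on ball 1 1" by (rule holomorphic_on_Ln[OF bnp])
  have dLn: "\<And>z. z \<in> ball 1 1 \<Longrightarrow> deriv Ln z = inverse z"
    using bnp by (auto intro!: DERIV_imp_deriv has_field_derivative_Ln)
  have dLn1: "deriv Ln 1 = 1" using dLn[of 1] by simp
  have ddLn1: "deriv (deriv Ln) 1 = -1"
  proof -
    have "deriv (deriv Ln) 1 = deriv (\<lambda>z. inverse z) 1"
      by (rule dtrans[of "ball 1 1"]) (auto simp: dLn)
    also have "\<dots> = -1" by (rule DERIV_imp_deriv) (auto intro!: derivative_eq_intros)
    finally show ?thesis .
  qed
  have Leq: "\<And>n. (deriv ^^ n) (log_inv_fun f) 0 = (deriv ^^ n) (\<lambda>w. Ln (G w)) 0"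
  proof (rule higher_deriv_cong_ev)
    show "\<forall>\<^sub>F x in nhds 0. log_inv_fun f x = Ln (G x)"
      unfolding eventually_nhds
    proof (intro exI[of _ U] conjI ballI oU U0')
      fix w assume "w \<in> U"
      then show "log_inv_fun f w = Ln (G w)"
        using UU0 invg[of w] by (auto simp: log_inv_fun_def G_def D_def dg0)
    qed
  qed simp
  have L1: "deriv (\<lambda>w. Ln (G w)) 0 = deriv G 0"
    using dcomp[OF hLn _ hGU oU GU U0'] G0 dLn1 by simp
  have L2: "deriv (deriv (\<lambda>w. Ln (G w))) 0 = deriv (deriv G) 0 - (deriv G 0)^2"
    using dcomp2[OF hLn _ hGU oU GU U0'] G0 dLn1 ddLn1 by simp
  have dg: "\<And>w. w \<in> U0 \<Longrightarrow> deriv g w = w * deriv G w + G w"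
  proof -
    fix w assume w: "w \<in> U0"
    have "deriv g w = deriv (\<lambda>w. w * G w) w" by (rule dtrans[OF oU0 w gG])
    also have "\<dots> = w * deriv G w + 1 * G w"
      using dmulid[OF fdiff[OF hG oU0 w]] by simp
    finally show "deriv g w = w * deriv G w + G w" by simp
  qed
  have hG1: "deriv G holomorphic_on U0" using hd[OF hG oU0] .
  have hG2: "deriv (deriv G) holomorphic_on U0" using hd[OF hG1 oU0] .
  have ddg: "\<And>w. w \<in> U0 \<Longrightarrow> deriv (deriv g) w = w * deriv (deriv G) w + 2 * deriv G w"
  proof -
    fix w assume w: "w \<in> U0"
    have "deriv (deriv g) w = deriv (\<lambda>w. w * deriv G w + G w) w" by (rule dtrans[OF oU0 w dg])
    also have "\<dots> = deriv (\<lambda>w. w * deriv G w) w + deriv G w"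
      by (subst deriv_add) (use fdiff[OF hG1 oU0 w] fdiff[OF hG oU0 w] in \<open>auto intro: field_differentiable_mult\<close>)
    also have "deriv (\<lambda>w. w * deriv G w) w = w * deriv (deriv G) w + 1 * deriv G w"
      using dmulid[OF fdiff[OF hG1 oU0 w]] by simp
    finally show "deriv (deriv g) w = w * deriv (deriv G) w + 2 * deriv G w" by simp
  qed
  have dddg0: "deriv (deriv (deriv g)) 0 = 3 * deriv (deriv G) 0"
  proof -
    have "deriv (deriv (deriv g)) 0 = deriv (\<lambda>w. w * deriv (deriv G) w + 2 * deriv G w) 0"
      by (rule dtrans[OF oU0 U00 ddg])
    also have "\<dots> = deriv (\<lambda>w. w * deriv (deriv G) w) 0 + 2 * deriv (deriv G) 0"
      by (subst deriv_add) (use fdiff[OF hG2 oU0 U00] fdiff[OF hG1 oU0 U00] in \<open>auto simp: deriv_cmult intro: field_differentiable_mult\<close>)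
    also have "deriv (\<lambda>w. w * deriv (deriv G) w) 0 = 0 * deriv (deriv (deriv G)) 0 + 1 * deriv (deriv G) 0"
      using dmulid[OF fdiff[OF hG2 oU0 U00]] by simp
    finally show ?thesis by simp
  qed
  have ddg0: "deriv (deriv g) 0 = 2 * deriv G 0" using ddg[OF U00] by simp
  have id2: "(deriv ^^ n) (\<lambda>w. f (g w)) 0 = (deriv ^^ n) (\<lambda>w. w) 0" for n
    by (rule higher_deriv_cong_ev) (use oU0 U00 fg in \<open>auto simp: eventually_nhds\<close>)
  have e2: "deriv (deriv f) 0 + deriv (deriv g) 0 = 0"
    using dcomp2[OF hf oD hg' oU0 gU0 U00] id2[of 2] g0 dg0 df0 by (simp add: funpow_deriv)
  have e3: "deriv (deriv (deriv f)) 0 + 3 * deriv (deriv f) 0 * deriv (deriv g) 0 + deriv (deriv (deriv g)) 0 = 0"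
    using dcomp3[OF hf oD hg' oU0 gU0 U00] id2[of 3] g0 dg0 df0 by (simp add: funpow_deriv)
  have c1: "log_inv_coeff f 1 = deriv G 0 / 2"
    using Leq[of 1] L1 by (simp add: log_inv_coeff_def funpow_deriv)
  have c2: "log_inv_coeff f 2 = (deriv (deriv G) 0 - (deriv G 0)^2) / 4"
    using Leq[of 2] L2 by (simp add: log_inv_coeff_def funpow_deriv)
  show ?thesis
    by (rule alg[OF e2 ddg0 e3 dddg0 c1 c2])
qed




lemma inj_Re_pos:
  fixes p :: "complex \<Rightarrow> complex"
  assumes hp: "p holomorphic_on ball 0 1" and pos: "\<And>z. z \<in> ball 0 1 \<Longrightarrow> Re (deriv p z) > 0"
  shows "inj_on p (ball 0 1)"
proof (rule inj_onI, rule ccontr)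
  fix a b assume a: "a \<in> ball (0::complex) 1" and b: "b \<in> ball (0::complex) 1" and eq: "p a = p b" and ne: "a \<noteq> b"
  define L where "L t = a + of_real t * (b - a)" for t :: real
  have seg: "closed_segment a b \<subseteq> ball 0 1" by (rule closed_segment_subset[OF a b convex_ball])
  have Lin: "L t \<in> ball 0 1" if "0 \<le> t" "t \<le> 1" for t
  proof -
    have "L t = (1 - t) *\<^sub>R a + t *\<^sub>R b" by (simp add: L_def scaleR_conv_of_real algebra_simps)
    then have "L t \<in> closed_segment a b" using that by (auto simp: closed_segment_def)
    then show ?thesis using seg by blast
  qed
  define phi where "phi t = Re (p (L t) / (b - a))" for t
  have D: "DERIV phi t :> Re (deriv p (L t))" if "0 \<le> t" "t \<le> 1" for t
  proof -
    have Lt: "L t \<in> ball 0 1" using Lin that by blast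
    have dp: "(p has_field_derivative deriv p (L t)) (at (a + of_real t * (b - a)))"
      using holomorphic_derivI[OF hp open_ball Lt] by (simp add: L_def)
    have lin: "((\<lambda>z. a + z * (b - a)) has_field_derivative (b - a)) (at (of_real t))"
      by (auto intro!: derivative_eq_intros)
    have "((\<lambda>z. p (a + z * (b - a))) has_field_derivative deriv p (L t) * (b - a)) (at (of_real t))"
      using DERIV_chain2[of p "deriv p (L t)" "\<lambda>z. a + z * (b - a)" "of_real t", OF _ lin] dp by simp
    then have "((\<lambda>z. p (a + z * (b - a)) / (b - a)) has_field_derivative deriv p (L t) * (b - a) / (b - a)) (at (of_real t))"
      by (rule DERIV_cdivide)
    then have "((\<lambda>z. p (a + z * (b - a)) / (b - a)) has_field_derivative deriv p (L t)) (at (of_real t))"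
      using ne by simp
    then have "((\<lambda>x. p (a + of_real x * (b - a)) / (b - a)) has_vector_derivative deriv p (L t)) (at t)"
      by (rule has_vector_derivative_real_field)
    then have "((\<lambda>x. Re (p (a + of_real x * (b - a)) / (b - a))) has_field_derivative Re (deriv p (L t))) (at t)"
      by (rule has_field_derivative_Re)
    moreover have "phi = (\<lambda>x. Re (p (a + of_real x * (b - a)) / (b - a)))"
      by (simp add: fun_eq_iff phi_def L_def)
    ultimately show ?thesis by (simp add: L_def)
  qed
  obtain z where z: "0 < z" "z < 1" "phi 1 - phi 0 = (1 - 0) * Re (deriv p (L z))"
    using MVT2[of 0 1 phi "\<lambda>t. Re (deriv p (L t))"] D by force
  have "phi 1 = phi 0" using eq by (simp add: phi_def L_def)
  then have "Re (deriv p (L z)) = 0" using z by simp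
  moreover have "Re (deriv p (L z)) > 0" using pos Lin z by simp
  ultimately show False by simp
qed

lemma prim:
  fixes p :: "complex \<Rightarrow> complex"
  assumes hp: "p holomorphic_on ball 0 1" and z: "z \<in> ball 0 1"
  shows "((\<lambda>z. contour_integral (linepath 0 z) p) has_field_derivative p z) (at z)"
proof (rule triangle_contour_integrals_starlike_primitive[OF holomorphic_on_imp_continuous_on[OF hp] _ open_ball z])
  show "0 \<in> ball (0::complex) 1" by simp
  show "closed_segment 0 y \<subseteq> ball 0 1" if "y \<in> ball 0 1" for y :: complex
    using that by (intro closed_segment_subset) auto
  show "contour_integral (linepath 0 b) p + contour_integral (linepath b c) p + contour_integral (linepath c 0) p = 0"
    if bc: "closed_segment b c \<subseteq> ball 0 1" for b c :: complex
  proof (rule has_chain_integral_chain_integral3)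
    have b: "b \<in> ball 0 1" and c: "c \<in> ball 0 1" using bc by auto
    have s1: "closed_segment 0 b \<subseteq> ball 0 1" using b by (intro closed_segment_subset) auto
    have s3: "closed_segment c 0 \<subseteq> ball 0 1" using c by (intro closed_segment_subset) auto
    show "(p has_contour_integral 0) (linepath 0 b +++ linepath b c +++ linepath c 0)"
      by (rule Cauchy_theorem_convex_simple[OF hp convex_ball])
         (use s1 s3 bc in \<open>auto simp: path_image_join\<close>)
  qed
qed


lemma int_BT:
  fixes om :: "complex \<Rightarrow> complex"
  assumes hw: "om holomorphic_on ball 0 1" and wimg: "om ` ball 0 1 \<subseteq> ball 0 1" and w0: "om 0 = 0"
    and Fdef: "F = (\<lambda>z. contour_integral (linepath 0 z) (\<lambda>t. Bfun (om t)))"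
  shows "F \<in> classBT" and "\<And>z. z \<in> ball 0 1 \<Longrightarrow> deriv F z = Bfun (om z)"
proof -
  have hp: "(\<lambda>t. Bfun (om t)) holomorphic_on ball 0 1" by (rule hcomp[OF B_hol hw wimg])
  have DF: "\<And>z. z \<in> ball 0 1 \<Longrightarrow> (F has_field_derivative Bfun (om z)) (at z)"
    unfolding Fdef using prim[OF hp] by blast
  show dF: "\<And>z. z \<in> ball 0 1 \<Longrightarrow> deriv F z = Bfun (om z)"
    using DF DERIV_imp_deriv by blast
  have hF: "F holomorphic_on ball 0 1"
    unfolding holomorphic_on_open[OF open_ball] using DF by blast
  have F0: "F 0 = 0" by (simp add: Fdef)
  have dF0: "deriv F 0 = 1" using dF[of 0] w0 B0 by simp
  have nw: "\<And>z. z \<in> ball 0 1 \<Longrightarrow> norm (om z) < 1" using wimg by (meson image_subset_iff mem_ball_0)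
  have inj: "inj_on F (ball 0 1)"
    by (rule inj_Re_pos[OF hF]) (use dF nw ReB in auto)
  have sub: "subordinate (deriv F) Bfun"
    unfolding subordinate_def using hw w0 nw dF by blast
  show "F \<in> classBT" using hF inj F0 dF0 sub by (simp add: classBT_def classS_def)
qed

lemma f1_props: "f1 \<in> classBT" "\<And>z. z \<in> ball 0 1 \<Longrightarrow> deriv f1 z = Bfun z"
proof -
  have e: "f1 = (\<lambda>z. contour_integral (linepath 0 z) (\<lambda>t. Bfun ((\<lambda>x. x) t)))"
    by (simp add: fun_eq_iff f1_def)
  show "f1 \<in> classBT" "\<And>z. z \<in> ball 0 1 \<Longrightarrow> deriv f1 z = Bfun z"
    using int_BT[of "\<lambda>x. x", OF _ _ _ e] by auto
qed

lemma sq_hol: "(\<lambda>x::complex. x^2) holomorphic_on A"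
  by (rule holomorphic_on_power[OF holomorphic_on_ident])

lemma f2_props: "f2 \<in> classBT" "\<And>z. z \<in> ball 0 1 \<Longrightarrow> deriv f2 z = Bfun (z^2)"
proof -
  have e: "f2 = (\<lambda>z. contour_integral (linepath 0 z) (\<lambda>t. Bfun ((\<lambda>x. x^2) t)))"
    by (simp add: fun_eq_iff f2_def)
  have img: "(\<lambda>x::complex. x^2) ` ball 0 1 \<subseteq> ball 0 1"
    by (auto simp: norm_power power_less_one_iff abs_square_less_1)
  show "f2 \<in> classBT" "\<And>z. z \<in> ball 0 1 \<Longrightarrow> deriv f2 z = Bfun (z^2)"
    using int_BT[of "\<lambda>x. x^2", OF sq_hol img _ e] by auto
qed

theorem theorem4p1:
  shows "(\<forall>f\<in>classBT. norm (log_inv_coeff f 1) \<le> 1/8 \<and> norm (log_inv_coeff f 2) \<le> 1/12)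
       \<and> (f1 \<in> classBT \<and> norm (log_inv_coeff f1 1) = 1/8)
       \<and> (f2 \<in> classBT \<and> norm (log_inv_coeff f2 2) = 1/12)"
proof (intro conjI ballI)
  fix f assume f: "f \<in> classBT"
  then have fS: "f \<in> classS" and hf: "f holomorphic_on ball 0 1" by (auto simp: classBT_def classS_def)
  obtain om where hw: "om holomorphic_on ball 0 1" and w0: "om 0 = 0"
      and nw: "\<forall>z\<in>ball 0 1. norm (om z) < 1" and df: "\<forall>z\<in>ball 0 1. deriv f z = Bfun (om z)"
    using f by (auto simp: classBT_def subordinate_def)
  have wimg: "om ` ball 0 1 \<subseteq> ball 0 1" using nw by auto
  have nw': "\<And>z. norm z < 1 \<Longrightarrow> norm (om z) < 1" using nw by simp
  note IC = inv_coeffs[OF fS]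
  note FD = f_derivs[OF hf hw wimg w0] 
  define c where "c = deriv om 0"
  define d where "d = deriv (deriv om) 0"
  have fd1: "deriv (deriv f) 0 = c / 2" using FD(1) df by (simp add: c_def)
  have fd2: "deriv (deriv (deriv f)) 0 = - (c^2) / 4 + d / 2" using FD(2) df by (simp add: c_def d_def)
  have sc1: "norm c \<le> 1" using schwarz2(1)[OF hw w0 nw'] by (simp add: c_def)
  have sc2: "norm d \<le> 2 * (1 - (norm c)^2)" using schwarz2(2)[OF hw w0 nw'] by (simp add: c_def d_def)
  have G1: "log_inv_coeff f 1 = - c / 8" using IC fd1 by simp
  have G2: "log_inv_coeff f 2 = 13/192 * c^2 - d / 24"
    using IC fd1 fd2 by (simp add: field_simps power2_eq_square)
  show "norm (log_inv_coeff f 1) \<le> 1/8" using G1 sc1 by (simp add: norm_divide)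
  have "norm (log_inv_coeff f 2) \<le> norm (13/192 * c^2) + norm (d / 24)"
    unfolding G2 by (rule norm_triangle_ineq4)
  also have "\<dots> = 13/192 * (norm c)^2 + norm d / 24" by (simp add: norm_mult norm_power norm_divide)
  finally have "norm (log_inv_coeff f 2) \<le> 13/192 * (norm c)^2 + norm d / 24" .
  moreover have "norm d / 24 \<le> 1/12 - (norm c)^2 / 12" using sc2 by simp
  ultimately show "norm (log_inv_coeff f 2) \<le> 1/12" using zero_le_power2[of "norm c"] by linarith
next
  show "f1 \<in> classBT" by (rule f1_props(1))
  have hf: "f1 holomorphic_on ball 0 1" using f1_props(1) by (simp add: classBT_def classS_def)
  have img: "(\<lambda>x::complex. x) ` ball 0 1 \<subseteq> ball 0 1" by auto
  have FD: "deriv (deriv f1) 0 = deriv (\<lambda>x. x) 0 / 2"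
    using f_derivs(1)[OF hf _ img _] f1_props(2) by simp
  then have h: "deriv (deriv f1) 0 = 1/2" by simp
  have S1: "f1 \<in> classS" using f1_props(1) by (simp add: classBT_def)
  have "log_inv_coeff f1 1 = - deriv (deriv f1) 0 / 4" using inv_coeffs[OF S1] by blast
  then have "log_inv_coeff f1 1 = - 1 / 8" using h by simp
  then show "norm (log_inv_coeff f1 1) = 1/8" by simp
next
  show "f2 \<in> classBT" by (rule f2_props(1))
  have hf: "f2 holomorphic_on ball 0 1" using f2_props(1) by (simp add: classBT_def classS_def)
  have img: "(\<lambda>x::complex. x^2) ` ball 0 1 \<subseteq> ball 0 1"
    by (auto simp: norm_power power_less_one_iff abs_square_less_1)
  have hw: "(\<lambda>x::complex. x^2) holomorphic_on ball 0 1" by (rule sq_hol)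
  have d1: "deriv (\<lambda>x::complex. x^2) = (\<lambda>x. 2 * x)"
    by (rule ext, rule DERIV_imp_deriv) (auto intro!: derivative_eq_intros)
  have d2: "deriv (\<lambda>x::complex. 2 * x) 0 = 2" by simp
  have FD1: "deriv (deriv f2) 0 = 0"
    using f_derivs(1)[OF hf hw img _] f2_props(2) d1 by simp
  have FD2: "deriv (deriv (deriv f2)) 0 = 1"
    using f_derivs(2)[OF hf hw img _] f2_props(2) d1 d2 by simp
  have S2: "f2 \<in> classS" using f2_props(1) by (simp add: classBT_def)
  have "log_inv_coeff f2 2 = - deriv (deriv (deriv f2)) 0 / 12 + 3 * (deriv (deriv f2) 0)^2 / 16"
    using inv_coeffs[OF S2] by blast
  then have "log_inv_coeff f2 2 = - 1 / 12" using FD1 FD2 by simp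
  then show "norm (log_inv_coeff f2 2) = 1/12" by simp
qed

end
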